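(* Let $C\in\mathbb{R}^{p\times p}$ be positive definite, $w\in\mathbb{R}^p$, $\mu>0$. For $\tau>0$ let $\hat u_\tau\in(-\mu,\mu)^p$ be the unique real solution of $(\mu^2-u_j^2)[C^{-1}(w-u)]_j-u_j/\tau=0$, let $D_\tau$ be the diagonal matrix with $(D_\tau)_{jj}=\tau(\mu^2-\hat u_{\tau,j}^2)^2/(\mu^2+\hat u_{\tau,j}^2)$, and let $$E_\tau=\tau D_\tau(C+D_\tau)^{-1}C=\frac\tau2\bigl[D_\tau(C+D_\tau)^{-1}C+C(C+D_\tau)^{-1}D_\tau\bigr].$$ With $\hat u=\lim_{\tau\to\infty}\hat u_\tau$, $\hat x=C^{-1}(w-\hat u)$, $I=\{j:\hat x_j\neq0\}$ and $I^c=\{1,\dots,p\}\setminus I$, assume there are no transition coordinates, i.e. $|\hat u_j|<\mu$ for all $j\in I^c$. Then as $\tau\to\infty$, $$(E_\tau)_{ij}=\begin{cases}O(\tau) & i,j\in I^c,\\ O(1) & \text{otherwise.}\end{cases}$$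
   Context: Standing facts: $\hat u_\tau\to\hat u$, where $\hat u$ is the unique minimizer of $(w-u)^TC^{-1}(w-u)$ over $\{|u_j|\le\mu\ \forall j\}$, and $\hat x=C^{-1}(w-\hat u)$ is the unique minimizer of $H(x)=x^TCx-2w^Tx+2\mu\|x\|_1$; also $\hat x_\tau:=C^{-1}(w-\hat u_\tau)\to\hat x$. For $j\in I$ one has $|\hat u_j|=\mu$. *)

theory Defs
  imports "HOL-Analysis.Analysis" "HOL-Library.Landau_Symbols"
begin

definition pos_def_mat :: "real^'n^'n \<Rightarrow> bool" where
  "pos_def_mat C \<longleftrightarrow> transpose C = C \<and> (\<forall>x. x \<noteq> 0 \<longrightarrow> x \<bullet> (C *v x) > 0)"

definition tau_sol :: "real^'n^'n \<Rightarrow> real^'n \<Rightarrow> real \<Rightarrow> real \<Rightarrow> real^'n \<Rightarrow> bool" where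
  "tau_sol C w mu tau u \<longleftrightarrow>
     (\<forall>j. \<bar>u $ j\<bar> < mu) \<and>
     (\<forall>j. (mu^2 - (u $ j)^2) * ((matrix_inv C *v (w - u)) $ j) - u $ j / tau = 0)"

definition u_hat :: "real^'n^'n \<Rightarrow> real^'n \<Rightarrow> real \<Rightarrow> real \<Rightarrow> real^'n" where
  "u_hat C w mu tau = (THE u. tau_sol C w mu tau u)"

definition D_mat :: "real^'n^'n \<Rightarrow> real^'n \<Rightarrow> real \<Rightarrow> real \<Rightarrow> real^'n^'n" where
  "D_mat C w mu tau = (\<chi> i j. if i = j then
      tau * (mu^2 - (u_hat C w mu tau $ j)^2)^2 / (mu^2 + (u_hat C w mu tau $ j)^2) else 0)"

definition E_mat :: "real^'n^'n \<Rightarrow> real^'n \<Rightarrow> real \<Rightarrow> real \<Rightarrow> real^'n^'n" where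
  "E_mat C w mu tau = tau *\<^sub>R (D_mat C w mu tau ** matrix_inv (C + D_mat C w mu tau) ** C)"

end

theory Submission
  imports Defs
begin

lemma minv: fixes A :: "real^'n^'n" assumes "invertible A"
  shows "A ** matrix_inv A = mat 1" "matrix_inv A ** A = mat 1"
  using someI_ex[OF assms[unfolded invertible_def]] unfolding matrix_inv_def by auto

lemma posdef_lower:
  fixes C :: "real^'n^'n"
  assumes "\<forall>x. x \<noteq> 0 \<longrightarrow> x \<bullet> (C *v x) > 0"
  shows "\<exists>l>0. \<forall>x. l * norm x ^ 2 \<le> x \<bullet> (C *v x)"
proof -
  have cont: "continuous_on (sphere 0 1) (\<lambda>x::real^'n. x \<bullet> (C *v x))"
    by (intro continuous_intros)
  have ne: "sphere (0::real^'n) 1 \<noteq> {}"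
    using norm_axis_1 by (metis mem_sphere_0 empty_iff)
  obtain x0 where x0: "x0 \<in> sphere 0 1" "\<forall>y\<in>sphere 0 1. x0 \<bullet> (C *v x0) \<le> y \<bullet> (C *v y)"
    using continuous_attains_inf[OF compact_sphere ne cont] by blast
  have "x0 \<noteq> 0" using x0(1) by auto
  then have pos: "x0 \<bullet> (C *v x0) > 0" using assms by auto
  show ?thesis
  proof (intro exI[of _ "x0 \<bullet> (C *v x0)"] conjI allI pos)
    fix x :: "real^'n"
    show "x0 \<bullet> (C *v x0) * norm x ^ 2 \<le> x \<bullet> (C *v x)"
    proof (cases "x = 0")
      case True then show ?thesis by simp
    next
      case False
      let ?y = "(1 / norm x) *\<^sub>R x"
      have "?y \<in> sphere 0 1" using False by simp
      then have h: "x0 \<bullet> (C *v x0) \<le> ?y \<bullet> (C *v ?y)" using x0(2) by blast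
      have "?y \<bullet> (C *v ?y) = (1 / norm x) * ((1 / norm x) * (x \<bullet> (C *v x)))"
        by (simp only: matrix_vector_mult_scaleR inner_scaleR_left inner_scaleR_right)
      also have "\<dots> = (x \<bullet> (C *v x)) / norm x ^ 2"
        by (simp add: power2_eq_square)
      finally have "x0 \<bullet> (C *v x0) \<le> (x \<bullet> (C *v x)) / norm x ^ 2" using h by simp
      with False show ?thesis by (simp add: pos_le_divide_eq)
    qed
  qed
qed

lemma inv_bound:
  fixes A :: "real^'n^'n"
  assumes l: "l > 0" and h: "\<forall>x. l * norm x ^ 2 \<le> x \<bullet> (A *v x)"
  shows "invertible A" "\<forall>i j. \<bar>matrix_inv A $ i $ j\<bar> \<le> 1 / l"
proof -
  have "\<forall>x. A *v x = 0 \<longrightarrow> x = 0"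
  proof (intro allI impI)
    fix x assume "A *v x = 0"
    then have "l * norm x ^ 2 \<le> 0" using h[rule_format, of x] by simp
    then show "x = 0" using l by (simp add: mult_le_0_iff)
  qed
  then show inv: "invertible A"
    using matrix_left_invertible_ker invertible_left_inverse by blast
  show "\<forall>i j. \<bar>matrix_inv A $ i $ j\<bar> \<le> 1 / l"
  proof (intro allI)
    fix i j
    let ?y = "axis j (1::real) :: real^'n" let ?x = "matrix_inv A *v ?y"
    have Ax: "A *v ?x = ?y" using minv(1)[OF inv] by (simp add: matrix_vector_mul_assoc)
    have "l * norm ?x ^ 2 \<le> ?x \<bullet> ?y" using h[rule_format, of ?x] Ax by simp
    also have "\<dots> \<le> norm ?x * norm ?y" by (rule norm_cauchy_schwarz)
    finally have "l * norm ?x ^ 2 \<le> norm ?x" by (simp add: norm_axis_1)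
    then have nx: "norm ?x \<le> 1 / l"
    proof (cases "norm ?x = 0")
      case True then show ?thesis using l by simp
    next
      case False
      then have np: "norm ?x > 0" by simp
      assume "l * norm ?x ^ 2 \<le> norm ?x"
      then have "norm ?x * (l * norm ?x) \<le> norm ?x * 1" by (simp add: power2_eq_square mult.commute mult.left_commute)
      then have "l * norm ?x \<le> 1" using np by (rule mult_left_le_imp_le)
      then show ?thesis using l by (simp add: pos_le_divide_eq mult.commute)
    qed
    have "matrix_inv A $ i $ j = ?x $ i"
      by (simp only: matrix_vector_mult_basis column_def vec_lambda_beta)
    then show "\<bar>matrix_inv A $ i $ j\<bar> \<le> 1 / l"
      using component_le_norm_cart[of ?x i] nx by simp
  qed
qed

lemma prod_bound:
  fixes P Q :: "real^'n^'n"
  assumes "\<forall>i k. \<bar>P $ i $ k\<bar> \<le> a" "\<forall>k j. \<bar>Q $ k $ j\<bar> \<le> b"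
  shows "\<bar>(P ** Q) $ i $ j\<bar> \<le> real CARD('n) * (a * b)"
proof -
  have "\<bar>(P ** Q) $ i $ j\<bar> = \<bar>\<Sum>k\<in>UNIV. P $ i $ k * Q $ k $ j\<bar>"
    by (simp add: matrix_matrix_mult_def)
  also have "\<dots> \<le> (\<Sum>k\<in>UNIV. \<bar>P $ i $ k\<bar> * \<bar>Q $ k $ j\<bar>)"
    by (simp only: abs_mult[symmetric]) (rule sum_abs)
  also have "\<dots> \<le> (\<Sum>k\<in>(UNIV::'n set). a * b)"
  proof (intro sum_mono mult_mono)
    fix k
    show "\<bar>P $ i $ k\<bar> \<le> a" "\<bar>Q $ k $ j\<bar> \<le> b" using assms by auto
    show "0 \<le> a" using assms(1) by (meson abs_ge_zero order_trans)
    show "0 \<le> \<bar>Q $ k $ j\<bar>" by simp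
  qed
  finally show ?thesis by simp
qed

lemma diag_left:
  fixes D B :: "real^'n^'n"
  assumes "\<forall>i j. i \<noteq> j \<longrightarrow> D $ i $ j = 0"
  shows "(D ** B) $ i $ j = D $ i $ i * B $ i $ j"
proof -
  have "(\<Sum>k\<in>UNIV. D $ i $ k * B $ k $ j) = (\<Sum>k\<in>UNIV. if k = i then D $ i $ i * B $ i $ j else 0)"
    by (rule sum.cong) (use assms in auto)
  then show ?thesis by (simp add: matrix_matrix_mult_def)
qed

lemma diag_right:
  fixes D B :: "real^'n^'n"
  assumes "\<forall>i j. i \<noteq> j \<longrightarrow> D $ i $ j = 0"
  shows "(B ** D) $ i $ j = B $ i $ j * D $ j $ j"
proof -
  have "(\<Sum>k\<in>UNIV. B $ i $ k * D $ k $ j) = (\<Sum>k\<in>UNIV. if k = j then B $ i $ j * D $ j $ j else 0)"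
    by (rule sum.cong) (use assms in auto)
  then show ?thesis by (simp add: matrix_matrix_mult_def)
qed

lemma diag_quad:
  fixes D :: "real^'n^'n"
  assumes "\<forall>i j. i \<noteq> j \<longrightarrow> D $ i $ j = 0" "\<forall>i. D $ i $ i \<ge> 0"
  shows "x \<bullet> (D *v x) \<ge> 0"
proof -
  have "x \<bullet> (D *v x) = (\<Sum>i\<in>UNIV. x $ i * (D $ i $ i * x $ i))"
  proof -
    have "(D *v x) $ i = D $ i $ i * x $ i" for i
    proof -
      have "(\<Sum>k\<in>UNIV. D $ i $ k * x $ k) = (\<Sum>k\<in>UNIV. if k = i then D $ i $ i * x $ i else 0)"
        by (rule sum.cong) (use assms in auto)
      then show ?thesis by (simp add: matrix_vector_mult_def)
    qed
    then show ?thesis by (simp add: inner_vec_def)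
  qed
  also have "\<dots> \<ge> 0" using assms(2)
    by (intro sum_nonneg) (metis mult.left_commute mult_nonneg_nonneg zero_le_square)
  finally show ?thesis .
qed

lemma msub_r: fixes A B C :: "real^'n^'n" shows "(A - B) ** C = A ** C - B ** C"
  by (vector matrix_matrix_mult_def sum_subtractf[symmetric] field_simps)
lemma msub_l: fixes A B C :: "real^'n^'n" shows "C ** (A - B) = C ** A - C ** B"
  by (vector matrix_matrix_mult_def sum_subtractf[symmetric] field_simps)

lemma swap_id:
  fixes A C :: "real^'n^'n"
  assumes "invertible A"
  shows "(A - C) ** matrix_inv A ** C = C ** matrix_inv A ** (A - C)"
proof -
  note m = minv[OF assms]
  have 1: "(A - C) ** matrix_inv A = mat 1 - C ** matrix_inv A"
    using msub_r[of A C "matrix_inv A"] m(1) by simp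
  have 2: "(mat 1 - C ** matrix_inv A) ** C = C - C ** matrix_inv A ** C"
    using msub_r[of "mat 1" "C ** matrix_inv A" C] by simp
  have 3: "C ** matrix_inv A ** (A - C) = C ** matrix_inv A ** A - C ** matrix_inv A ** C"
    by (rule msub_l)
  have 4: "C ** matrix_inv A ** A = C"
    using matrix_mul_assoc[of C "matrix_inv A" A] m(2) by simp
  show ?thesis using 1 2 3 4 by simp
qed


lemma mid_id:
  fixes A C :: "real^'n^'n"
  assumes "invertible A"
  shows "(A - C) ** matrix_inv A ** C = C - C ** matrix_inv A ** C"
proof -
  note m = minv[OF assms]
  have 1: "(A - C) ** matrix_inv A = mat 1 - C ** matrix_inv A"
    using msub_r[of A C "matrix_inv A"] m(1) by simp
  have 2: "(mat 1 - C ** matrix_inv A) ** C = C - C ** matrix_inv A ** C"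
    using msub_r[of "mat 1" "C ** matrix_inv A" C] by simp
  show ?thesis using 1 2 by simp
qed

lemma scal_bound:
  fixes tau mu u xt c :: real
  assumes "tau > 0" "mu > 0" "(mu^2 - u^2) * xt - u / tau = 0" "\<bar>xt\<bar> \<ge> c" "c > 0"
  shows "tau * (tau * (mu^2 - u^2)^2 / (mu^2 + u^2)) \<le> 1 / c^2"
proof -
  have xt: "xt \<noteq> 0" using assms by auto
  have e: "tau * (mu^2 - u^2) = u / xt"
    using assms(1,3) xt by (simp add: field_simps)
  have pos: "mu^2 + u^2 > 0" using assms(2) by (simp add: add_pos_nonneg)
  have "tau * (tau * (mu^2 - u^2)^2 / (mu^2 + u^2)) = (tau * (mu^2 - u^2))^2 / (mu^2 + u^2)"
    by (simp add: power2_eq_square)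
  also have "\<dots> = (u^2 / (mu^2 + u^2)) * (1 / xt^2)"
    unfolding e by (simp add: power_divide)
  also have "\<dots> \<le> 1 * (1 / xt^2)"
    by (intro mult_right_mono) (use pos in auto)
  also have "\<dots> \<le> 1 / c^2"
  proof -
    have "c^2 \<le> \<bar>xt\<bar>^2" using assms(4,5) by (intro power_mono) auto
    then have "c^2 \<le> xt^2" by simp
    then show ?thesis using assms(5) by (simp add: frac_le)
  qed
  finally show ?thesis .
qed

lemma entry_le_sum:
  fixes C :: "real^'n^'n"
  shows "\<bar>C $ i $ j\<bar> \<le> (\<Sum>a\<in>UNIV. \<Sum>b\<in>UNIV. \<bar>C $ a $ b\<bar>)"
proof -
  have "\<bar>C $ i $ j\<bar> \<le> (\<Sum>b\<in>UNIV. \<bar>C $ i $ b\<bar>)"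
    by (rule member_le_sum) auto
  also have "\<dots> \<le> (\<Sum>a\<in>UNIV. \<Sum>b\<in>UNIV. \<bar>C $ a $ b\<bar>)"
    by (rule member_le_sum[of _ _ "\<lambda>a. \<Sum>b\<in>UNIV. \<bar>C $ a $ b\<bar>"]) (auto intro: sum_nonneg)
  finally show ?thesis .
qed


theorem proposition1:
  fixes C :: "real^'n^'n" and w :: "real^'n" and mu :: real and U :: "real^'n"
  assumes "pos_def_mat C" and "mu > 0"
    and "\<And>tau. tau > 0 \<Longrightarrow> \<exists>!u. tau_sol C w mu tau u"
    and "((\<lambda>tau. u_hat C w mu tau) \<longlongrightarrow> U) at_top"
    and "\<And>j. (matrix_inv C *v (w - U)) $ j = 0 \<Longrightarrow> \<bar>U $ j\<bar> < mu"
  shows "\<forall>i j. (if (matrix_inv C *v (w - U)) $ i = 0 \<and> (matrix_inv C *v (w - U)) $ j = 0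
                 then (\<lambda>tau. E_mat C w mu tau $ i $ j) \<in> O[at_top](\<lambda>tau. tau)
                 else (\<lambda>tau. E_mat C w mu tau $ i $ j) \<in> O[at_top](\<lambda>_. 1))"
proof -
  define x where "x = matrix_inv C *v (w - U)"
  define D where "D = D_mat C w mu"
  define Ai where "Ai = (\<lambda>tau. matrix_inv (C + D tau))"
  define KC where "KC = (\<Sum>a\<in>UNIV. \<Sum>b\<in>UNIV. \<bar>C $ a $ b\<bar>)"
  define N where "N = real CARD('n)"
  obtain l where l: "l > 0" "\<forall>x. l * norm x ^ 2 \<le> x \<bullet> (C *v x)"
    using posdef_lower assms(1) unfolding pos_def_mat_def by blast
  have KC: "\<forall>a b. \<bar>C $ a $ b\<bar> \<le> KC" unfolding KC_def using entry_le_sum by blast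
  have Ddiag: "\<forall>i j. i \<noteq> j \<longrightarrow> D tau $ i $ j = 0" for tau
    unfolding D_def D_mat_def by simp
  have Dnn: "\<forall>i. D tau $ i $ i \<ge> 0" if "tau > 0" for tau
  proof
    fix i
    have "mu^2 + (u_hat C w mu tau $ i)^2 > 0" using assms(2) by (simp add: add_pos_nonneg)
    then show "D tau $ i $ i \<ge> 0" unfolding D_def D_mat_def using that by simp
  qed
  have Abd: "invertible (C + D tau) \<and> (\<forall>i j. \<bar>Ai tau $ i $ j\<bar> \<le> 1 / l)" if "tau > 0" for tau
  proof -
    have "\<forall>y. l * norm y ^ 2 \<le> y \<bullet> ((C + D tau) *v y)"
    proof
      fix y :: "real^'n"
      have "y \<bullet> ((C + D tau) *v y) = y \<bullet> (C *v y) + y \<bullet> (D tau *v y)"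
        by (simp add: matrix_vector_mult_add_rdistrib inner_add_right)
      then show "l * norm y ^ 2 \<le> y \<bullet> ((C + D tau) *v y)"
        using l(2) diag_quad[OF Ddiag Dnn[OF that], of y] by (metis add_increasing2)
    qed
    then show ?thesis using inv_bound[OF l(1)] unfolding Ai_def by blast
  qed
  define B1 where "B1 = N * (1 / l * KC)"
  define B2 where "B2 = N * (B1 * KC)"
  have AiC: "\<bar>(Ai tau ** C) $ i $ j\<bar> \<le> B1" if "tau > 0" for tau i j
    unfolding B1_def N_def using prod_bound[of "Ai tau" "1/l" C KC] Abd[OF that] KC by blast
  have CAi: "\<bar>(C ** Ai tau) $ i $ j\<bar> \<le> B1" if "tau > 0" for tau i j
    unfolding B1_def N_def using prod_bound[of C KC "Ai tau" "1/l"] Abd[OF that] KC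
    by (simp add: mult.commute)
  have CAiC: "\<bar>(C ** Ai tau ** C) $ i $ j\<bar> \<le> B2" if "tau > 0" for tau i j
    unfolding B2_def N_def using prod_bound[of "C ** Ai tau" B1 C KC] CAi[OF that] KC by blast
  have Eeq: "E_mat C w mu tau $ i $ j = tau * (D tau ** Ai tau ** C) $ i $ j" for tau i j
    unfolding E_mat_def D_def Ai_def by simp
  have ApC: "(C + D tau) - C = D tau" for tau by simp
  have Dsmall: "\<forall>\<^sub>F tau in at_top. 0 \<le> tau * D tau $ j $ j \<and> tau * D tau $ j $ j \<le> 1 / (\<bar>x $ j\<bar> / 2)^2"
    if xj: "x $ j \<noteq> 0" for j
  proof -
    have "((\<lambda>tau. (matrix_inv C *v (w - u_hat C w mu tau)) $ j) \<longlongrightarrow> x $ j) at_top"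
      unfolding x_def
      by (intro tendsto_vec_nth isCont_tendsto_compose[OF matrix_vector_mult_linear_continuous_at]
          tendsto_diff tendsto_const assms(4))
    then have "((\<lambda>tau. \<bar>(matrix_inv C *v (w - u_hat C w mu tau)) $ j\<bar>) \<longlongrightarrow> \<bar>x $ j\<bar>) at_top"
      by (rule tendsto_rabs)
    moreover have "\<bar>x $ j\<bar> / 2 < \<bar>x $ j\<bar>" using xj by simp
    ultimately have ev: "\<forall>\<^sub>F tau in at_top. \<bar>x $ j\<bar> / 2 < \<bar>(matrix_inv C *v (w - u_hat C w mu tau)) $ j\<bar>"
      by (rule order_tendstoD(1))
    show ?thesis
      using ev eventually_gt_at_top[of 0]
    proof eventually_elim
      case (elim tau)
      have ts: "tau_sol C w mu tau (u_hat C w mu tau)"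
        unfolding u_hat_def using theI'[OF assms(3)[OF elim(2)]] .
      then have eq: "(mu^2 - (u_hat C w mu tau $ j)^2) * ((matrix_inv C *v (w - u_hat C w mu tau)) $ j)
          - u_hat C w mu tau $ j / tau = 0" unfolding tau_sol_def by blast
      have "tau * D tau $ j $ j \<le> 1 / (\<bar>x $ j\<bar> / 2)^2"
        unfolding D_def D_mat_def
        using scal_bound[OF elim(2) assms(2) eq, of "\<bar>x $ j\<bar> / 2"] elim(1) xj by simp
      moreover have "0 \<le> tau * D tau $ j $ j" using Dnn[OF elim(2)] elim(2) by simp
      ultimately show ?case by simp
    qed
  qed
  show ?thesis
  proof (intro allI)
    fix i j
    show "(if (matrix_inv C *v (w - U)) $ i = 0 \<and> (matrix_inv C *v (w - U)) $ j = 0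
                 then (\<lambda>tau. E_mat C w mu tau $ i $ j) \<in> O[at_top](\<lambda>tau. tau)
                 else (\<lambda>tau. E_mat C w mu tau $ i $ j) \<in> O[at_top](\<lambda>_. 1))"
    proof (cases "x $ i = 0 \<and> x $ j = 0")
      case True
      have "(\<lambda>tau. E_mat C w mu tau $ i $ j) \<in> O[at_top](\<lambda>tau. tau)"
      proof (rule bigoI[where c = "KC + B2"])
        show "\<forall>\<^sub>F tau in at_top. norm (E_mat C w mu tau $ i $ j) \<le> (KC + B2) * norm tau"
          using eventually_gt_at_top[of 0]
        proof eventually_elim
          case (elim tau)
          have inv: "invertible (C + D tau)" using Abd[OF elim] by blast
          have M: "D tau ** Ai tau ** C = C - C ** Ai tau ** C"
            using mid_id[OF inv, of C] unfolding ApC Ai_def .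
          have "\<bar>(D tau ** Ai tau ** C) $ i $ j\<bar> \<le> KC + B2"
            unfolding M using KC[rule_format, of i j] CAiC[OF elim, of i j] by (simp add: abs_diff_le_iff) linarith
          then have "\<bar>tau\<bar> * \<bar>(D tau ** Ai tau ** C) $ i $ j\<bar> \<le> \<bar>tau\<bar> * (KC + B2)"
            by (intro mult_left_mono) auto
          then show ?case unfolding Eeq by (simp add: abs_mult mult.commute)
        qed
      qed
      then show ?thesis using True unfolding x_def by simp
    next
      case False
      have "(\<lambda>tau. E_mat C w mu tau $ i $ j) \<in> O[at_top](\<lambda>_. 1)"
      proof (cases "x $ i \<noteq> 0")
        case True
        let ?K = "1 / (\<bar>x $ i\<bar> / 2)^2"
        show ?thesis
        proof (rule bigoI[where c = "?K * B1"])
          show "\<forall>\<^sub>F tau in at_top. norm (E_mat C w mu tau $ i $ j) \<le> (?K * B1) * norm (1::real)"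
            using Dsmall[OF True] eventually_gt_at_top[of 0]
          proof eventually_elim
            case (elim tau)
            have "(D tau ** Ai tau ** C) $ i $ j = D tau $ i $ i * (Ai tau ** C) $ i $ j"
              by (simp add: matrix_mul_assoc[symmetric] diag_left[OF Ddiag])
            then have "E_mat C w mu tau $ i $ j = (tau * D tau $ i $ i) * (Ai tau ** C) $ i $ j"
              unfolding Eeq by simp
            then have "\<bar>E_mat C w mu tau $ i $ j\<bar> = \<bar>tau * D tau $ i $ i\<bar> * \<bar>(Ai tau ** C) $ i $ j\<bar>"
              by (simp add: abs_mult)
            also have "\<dots> \<le> ?K * B1"
              using elim(1) AiC[OF elim(2), of i j] by (intro mult_mono) auto
            finally show ?case by simp
          qed
        qed
      next
        case False2: False
        then have xj: "x $ j \<noteq> 0" using False by auto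
        let ?K = "1 / (\<bar>x $ j\<bar> / 2)^2"
        show ?thesis
        proof (rule bigoI[where c = "?K * B1"])
          show "\<forall>\<^sub>F tau in at_top. norm (E_mat C w mu tau $ i $ j) \<le> (?K * B1) * norm (1::real)"
            using Dsmall[OF xj] eventually_gt_at_top[of 0]
          proof eventually_elim
            case (elim tau)
            have inv: "invertible (C + D tau)" using Abd[OF elim(2)] by blast
            have S: "D tau ** Ai tau ** C = C ** Ai tau ** D tau"
              using swap_id[OF inv, of C] unfolding ApC Ai_def .
            have "(D tau ** Ai tau ** C) $ i $ j = (C ** Ai tau) $ i $ j * D tau $ j $ j"
              unfolding S by (simp add: diag_right[OF Ddiag])
            then have "E_mat C w mu tau $ i $ j = (C ** Ai tau) $ i $ j * (tau * D tau $ j $ j)"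
              unfolding Eeq by simp
            then have "\<bar>E_mat C w mu tau $ i $ j\<bar> = \<bar>(C ** Ai tau) $ i $ j\<bar> * \<bar>tau * D tau $ j $ j\<bar>"
              by (simp add: abs_mult)
            also have "\<dots> \<le> B1 * ?K"
              using elim(1) CAi[OF elim(2), of i j] by (intro mult_mono) auto
            finally show ?case by (simp add: mult.commute)
          qed
        qed
      qed
      then show ?thesis using False unfolding x_def by auto
    qed
  qed
qed

end
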